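(* Let $m,n\in\mathbb{N}$, $m<n$, and $f\in\mathcal{H}(\mathbb{D})$. Then \[ \Bigl(\sup_{a\in\mathbb{D}}\|f^m\circ\phi_a-f^m(a)\|_{H^2}\Bigr)^{1/m}\le \Bigl(\sup_{a\in\mathbb{D}}\|f^n\circ\phi_a-f^n(a)\|_{H^2}\Bigr)^{1/n}, \] \[ \Bigl(\sup_{a\in\mathbb{D}}\|f^m\circ\phi_a-f^m(a)\|_{A^2}\Bigr)^{1/m}\le \Bigl(\sup_{a\in\mathbb{D}}\|f^n\circ\phi_a-f^n(a)\|_{A^2}\Bigr)^{1/n}. \] In particular, if $f^n\in BMOA$ ($f^n\in\mathscr{B}$), then $f^m\in BMOA$ ($f^m\in\mathscr{B}$). Moreover, if $f^n\in VMOA$ ($f^n\in\mathscr{B}_0$), then $f^m\in VMOA$ ($f^m\in\mathscr{B}_0$).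
   Context: $\mathcal{H}(\mathbb{D})$ is the space of analytic functions on the unit disc $\mathbb{D}$, $\phi_a(z)=\frac{a-z}{1-\overline{a}z}$ for $a\in\mathbb{D}$, $H^2$ is the Hardy space and $A^2$ the (unweighted) Bergman space. The quantities $\sup_{a\in\mathbb{D}}\|f\circ\phi_a-f(a)\|_{H^2}$ and $\sup_{a\in\mathbb{D}}\|f\circ\phi_a-f(a)\|_{A^2}$ are the Garsia seminorms of $BMOA$ and of the Bloch space $\mathscr{B}$ respectively; $BMOA$ ($\mathscr{B}$) consists of those $f$ for which the corresponding quantity is finite. $VMOA$ ($\mathscr{B}_0$) consists of $f\in H^2$ ($f\in A^2$) with $\lim_{|a|\to1^-}\|f\circ\phi_a-f(a)\|_{H^2}=0$ (respectively $\lim_{|a|\to1^-}\|f\circ\phi_a-f(a)\|_{A^2}=0$). *)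

theory Defs
  imports "HOL-Analysis.Analysis"
begin

definition disc_phi :: "complex \<Rightarrow> complex \<Rightarrow> complex" where
  "disc_phi a z = (a - z) / (1 - cnj a * z)"

definition ennroot :: "nat \<Rightarrow> ennreal \<Rightarrow> ennreal" where
  "ennroot k x = (if x = top then top else ennreal (root k (enn2real x)))"

definition hardy_norm :: "(complex \<Rightarrow> complex) \<Rightarrow> ennreal" where
  "hardy_norm g = ennroot 2 (SUP r\<in>{0..<1::real}.
      ennreal (1 / (2 * pi)) *
      (\<integral>\<^sup>+ t\<in>{0..2*pi}. ennreal ((cmod (g (complex_of_real r * cis t)))\<^sup>2) \<partial>lborel))"

definition bergman_norm :: "(complex \<Rightarrow> complex) \<Rightarrow> ennreal" where
  "bergman_norm g = ennroot 2 (ennreal (1 / pi) *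
      (\<integral>\<^sup>+ z\<in>ball 0 1. ennreal ((cmod (g z))\<^sup>2) \<partial>lborel))"

definition garsia_H2 :: "(complex \<Rightarrow> complex) \<Rightarrow> ennreal" where
  "garsia_H2 f = (SUP a\<in>ball 0 1. hardy_norm (\<lambda>z. f (disc_phi a z) - f a))"

definition garsia_A2 :: "(complex \<Rightarrow> complex) \<Rightarrow> ennreal" where
  "garsia_A2 f = (SUP a\<in>ball 0 1. bergman_norm (\<lambda>z. f (disc_phi a z) - f a))"

definition BMOA :: "(complex \<Rightarrow> complex) \<Rightarrow> bool" where
  "BMOA f \<longleftrightarrow> f holomorphic_on ball 0 1 \<and> garsia_H2 f < top"

definition Bloch :: "(complex \<Rightarrow> complex) \<Rightarrow> bool" where
  "Bloch f \<longleftrightarrow> f holomorphic_on ball 0 1 \<and> garsia_A2 f < top"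

definition VMOA :: "(complex \<Rightarrow> complex) \<Rightarrow> bool" where
  "VMOA f \<longleftrightarrow> f holomorphic_on ball 0 1 \<and> hardy_norm f < top \<and>
     (\<forall>e>0. \<exists>r<1. \<forall>a\<in>ball 0 1. r < norm a \<longrightarrow>
        hardy_norm (\<lambda>z. f (disc_phi a z) - f a) < ennreal e)"

definition little_Bloch :: "(complex \<Rightarrow> complex) \<Rightarrow> bool" where
  "little_Bloch f \<longleftrightarrow> f holomorphic_on ball 0 1 \<and> bergman_norm f < top \<and>
     (\<forall>e>0. \<exists>r<1. \<forall>a\<in>ball 0 1. r < norm a \<longrightarrow>
        bergman_norm (\<lambda>z. f (disc_phi a z) - f a) < ennreal e)"

end

theory Submission
  imports Defs "HOL-Complex_Analysis.Complex_Analysis" "HOL-Probability.Probability_Measure"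
begin

lemma ennreal_pow_less:
  fixes x y :: ennreal
  assumes "x < y" "0 < n" shows "x ^ n < y ^ n"
proof (cases "y = top")
  case True
  have "x \<noteq> top" using assms(1) by auto
  then obtain a where a: "x = ennreal a" "0 \<le> a" by (cases x rule: ennreal_cases) auto
  then show ?thesis using True assms(2)
    by (simp add: ennreal_power power_eq_top_ennreal top.not_eq_extremum)
next
  case False
  then obtain b where b: "y = ennreal b" "0 \<le> b" by (cases y rule: ennreal_cases) auto
  have "x \<noteq> top" using assms(1) by auto
  then obtain a where a: "x = ennreal a" "0 \<le> a" by (cases x rule: ennreal_cases) auto
  have "a < b" using a b assms(1) by (simp add: ennreal_less_iff)
  then have "a ^ n < b ^ n" using a(2) assms(2) by (simp add: power_strict_mono)
  then show ?thesis using a b by (simp add: ennreal_power ennreal_less_iff)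
qed

lemma ennreal_pow_le_cancel:
  fixes x y :: ennreal
  assumes "x ^ n \<le> y ^ n" "0 < n" shows "x \<le> y"
  using ennreal_pow_less[of y x n] assms by (meson not_le)

lemma ennroot_pow: "0 < k \<Longrightarrow> (ennroot k x) ^ k = x"
proof (cases "x = top")
  case True
  assume "0 < k" then show ?thesis using True by (simp add: ennroot_def power_eq_top_ennreal)
next
  case False
  assume k: "0 < k"
  have "ennroot k x ^ k = ennreal (root k (enn2real x) ^ k)"
    using False by (simp add: ennroot_def ennreal_power real_root_ge_zero)
  also have "\<dots> = ennreal (enn2real x)" using k by (simp add: real_root_pow_pos2)
  also have "\<dots> = x" using False by (simp add: less_top)
  finally show ?thesis .
qed

lemma ennroot_le_iff: "0 < k \<Longrightarrow> ennroot k x \<le> y \<longleftrightarrow> x \<le> y ^ k"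
proof
  assume k: "0 < k" and "ennroot k x \<le> y"
  then have "(ennroot k x) ^ k \<le> y ^ k" by (simp add: power_mono)
  then show "x \<le> y ^ k" using ennroot_pow[OF k] by simp
next
  assume k: "0 < k" and "x \<le> y ^ k"
  then have "(ennroot k x) ^ k \<le> y ^ k" using ennroot_pow[OF k] by simp
  then show "ennroot k x \<le> y" using ennreal_pow_le_cancel k by blast
qed

lemma ennroot_ge: "0 < k \<Longrightarrow> y ^ k \<le> z \<Longrightarrow> y \<le> ennroot k z"
  using ennreal_pow_le_cancel[of y k "ennroot k z"] ennroot_pow[of k z] by simp

lemma ennroot_less_top_iff: "0 < k \<Longrightarrow> ennroot k x < top \<longleftrightarrow> x < top"
  by (simp add: ennroot_def top.not_eq_extremum)

lemma ennroot_cmp_iff: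
  assumes "0 < a" "0 < b"
  shows "ennroot a X \<le> ennroot b Y \<longleftrightarrow> X ^ b \<le> Y ^ a"
proof
  assume h: "ennroot a X \<le> ennroot b Y"
  have "X ^ b = (ennroot a X) ^ (a * b)" using ennroot_pow[OF assms(1)] by (simp add: power_mult)
  also have "\<dots> \<le> (ennroot b Y) ^ (a * b)" using h by (simp add: power_mono)
  also have "\<dots> = Y ^ a" using ennroot_pow[OF assms(2)] by (simp add: power_mult mult.commute[of a b])
  finally show "X ^ b \<le> Y ^ a" .
next
  assume h: "X ^ b \<le> Y ^ a"
  define t where "t = ennroot b Y"
  have Y: "Y = t ^ b" using ennroot_pow[OF assms(2)] t_def by simp
  have "X ^ b \<le> (t ^ a) ^ b" using h Y by (simp add: power_mult[symmetric] mult.commute)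
  then have "X \<le> t ^ a" using ennreal_pow_le_cancel assms(2) by blast
  then show "ennroot a X \<le> ennroot b Y" using ennroot_le_iff[OF assms(1)] t_def by simp
qed

lemma ennroot2_pow_le:
  assumes "X ^ b \<le> Y ^ a"
  shows "(ennroot 2 X) ^ b \<le> (ennroot 2 Y) ^ a"
proof -
  have "((ennroot 2 X) ^ b) ^ 2 = X ^ b" using ennroot_pow[of 2 X]
    by (metis mult.commute power_mult zero_less_numeral)
  moreover have "((ennroot 2 Y) ^ a) ^ 2 = Y ^ a" using ennroot_pow[of 2 Y]
    by (metis mult.commute power_mult zero_less_numeral)
  ultimately show ?thesis using assms ennreal_pow_le_cancel[of _ 2] by (metis zero_less_numeral)
qed

lemma SUP_pow_le:
  fixes f g :: "'a \<Rightarrow> ennreal"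
  assumes "\<And>i. i \<in> A \<Longrightarrow> f i ^ n \<le> g i ^ m" "0 < n"
  shows "(SUP i\<in>A. f i) ^ n \<le> (SUP i\<in>A. g i) ^ m"
proof -
  have "f i \<le> ennroot n ((SUP i\<in>A. g i) ^ m)" if "i \<in> A" for i
  proof (rule ennroot_ge[OF assms(2)])
    have "g i \<le> (SUP i\<in>A. g i)" using that by (rule SUP_upper)
    then have "g i ^ m \<le> (SUP i\<in>A. g i) ^ m" by (simp add: power_mono)
    then show "f i ^ n \<le> (SUP i\<in>A. g i) ^ m" using assms(1)[OF that] by order
  qed
  then have "(SUP i\<in>A. f i) \<le> ennroot n ((SUP i\<in>A. g i) ^ m)" by (rule SUP_least)
  then have "(SUP i\<in>A. f i) ^ n \<le> (ennroot n ((SUP i\<in>A. g i) ^ m)) ^ n" by (simp add: power_mono)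
  then show ?thesis using ennroot_pow[OF assms(2)] by simp
qed

lemma powr_eq_mul_powr_minus1:
  fixes a p :: real assumes "0 \<le> a" "1 \<le> p"
  shows "a powr p = a * a powr (p - 1)"
proof (cases "a = 0")
  case True then show ?thesis using assms by simp
next
  case False
  have "a powr p = a powr (1 + (p - 1))" by simp
  also have "\<dots> = a powr 1 * a powr (p - 1)" using False by (simp only: powr_add)
  also have "a powr 1 = a" using assms(1) by simp
  finally show ?thesis .
qed

lemma powr_superadd:
  fixes a b p :: real assumes "0 \<le> a" "0 \<le> b" "1 \<le> p"
  shows "a powr p + b powr p \<le> (a + b) powr p"
proof -
  have "a powr (p - 1) \<le> (a + b) powr (p - 1)" using assms by (intro powr_mono2) auto
  then have 1: "a powr p \<le> a * (a + b) powr (p - 1)"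
    using powr_eq_mul_powr_minus1[OF assms(1,3)] assms by (simp add: mult_left_mono)
  have "b powr (p - 1) \<le> (a + b) powr (p - 1)" using assms by (intro powr_mono2) auto
  then have 2: "b powr p \<le> b * (a + b) powr (p - 1)"
    using powr_eq_mul_powr_minus1[OF assms(2,3)] assms by (simp add: mult_left_mono)
  have "(a + b) powr p = (a + b) * (a + b) powr (p - 1)"
    using powr_eq_mul_powr_minus1[of "a+b" p] assms by simp
  then show ?thesis using 1 2 by (simp add: distrib_right)
qed

lemma pow_powr_div:
  fixes t :: real assumes "0 \<le> t" "0 < m" "0 < n"
  shows "(t ^ m) powr (real n / real m) = t ^ n"
proof (cases "t = 0")
  case True then show ?thesis using assms by (cases n) auto
next
  case False
  then have "(t ^ m) powr (real n / real m) = (t powr real m) powr (real n / real m)"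
    using assms by (simp add: powr_realpow)
  also have "\<dots> = t powr real n" using assms by (simp add: powr_powr)
  also have "\<dots> = t ^ n" using assms False by (simp add: powr_realpow)
  finally show ?thesis .
qed

lemma powr_div_pow:
  fixes t :: real assumes "0 \<le> t" "0 < m" "0 < n"
  shows "(t powr (real n / real m)) ^ m = t ^ n"
proof (cases "t = 0")
  case True then show ?thesis using assms by (cases n) auto
next
  case False
  then have "(t powr (real n / real m)) ^ m = t powr (real n / real m * real m)"
    using assms by (simp add: powr_realpow[symmetric] powr_powr)
  also have "\<dots> = t ^ n" using assms False by (simp add: powr_realpow)
  finally show ?thesis .
qed

lemma elem_ineq:
  fixes x y :: real
  assumes "0 < m" "m < n" "0 \<le> y" "y \<le> x"
  shows "(x ^ m - y ^ m) ^ n \<le> (x ^ n - y ^ n) ^ m"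
proof -
  define p where "p = real n / real m"
  have p1: "1 \<le> p" using assms by (simp add: p_def)
  define A where "A = x ^ m - y ^ m"
  have A0: "0 \<le> A" using assms by (simp add: A_def power_mono)
  have "A powr p + (y ^ m) powr p \<le> (A + y ^ m) powr p"
    using powr_superadd[OF A0 _ p1] assms by simp
  also have "A + y ^ m = x ^ m" by (simp add: A_def)
  finally have "A powr p \<le> x ^ n - y ^ n"
    using pow_powr_div[of x m n] pow_powr_div[of y m n] assms unfolding p_def by simp
  then have "(A powr p) ^ m \<le> (x ^ n - y ^ n) ^ m" by (simp add: power_mono)
  then show ?thesis using powr_div_pow[OF A0 assms(1), of n] assms(2) by (simp add: A_def p_def)
qed

lemma elem_ineq2:
  fixes a b y :: real
  assumes "0 < m" "m < n" "0 \<le> y" "y ^ m \<le> a" "0 \<le> b" "a ^ n \<le> b ^ m"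
  shows "(a - y ^ m) ^ n \<le> (b - y ^ n) ^ m"
proof -
  have a0: "0 \<le> a" using assms by (meson order.trans zero_le_power)
  define x where "x = root m a"
  have x0: "0 \<le> x" using a0 by (simp add: x_def real_root_ge_zero)
  have xm: "x ^ m = a" using a0 assms(1) by (simp add: x_def real_root_pow_pos2)
  have yx: "y \<le> x" using assms(4) xm x0 assms(1,3) power_mono_iff[of y x m] by simp
  have "(x ^ n) ^ m \<le> b ^ m" using xm assms(6) by (metis mult.commute power_mult)
  then have xnb: "x ^ n \<le> b" using assms(1,5) x0 power_mono_iff[of "x^n" b m] by simp
  have "(a - y ^ m) ^ n = (x ^ m - y ^ m) ^ n" by (simp add: xm)
  also have "\<dots> \<le> (x ^ n - y ^ n) ^ m" using elem_ineq assms yx by blast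
  also have "\<dots> \<le> (b - y ^ n) ^ m"
    using xnb yx assms by (intro power_mono) (auto simp: power_mono)
  finally show ?thesis .
qed

lemma tangent_powr:
  fixes X mu p :: real assumes "0 < mu" "0 \<le> X" "1 \<le> p"
  shows "mu powr p + p * mu powr (p - 1) * (X - mu) \<le> X powr p"
proof (cases "X = 0")
  case True
  have "mu powr p = mu * mu powr (p - 1)" using powr_eq_mul_powr_minus1 assms by simp
  then have "mu powr p + p * mu powr (p - 1) * (0 - mu) = (1 - p) * mu powr p" by (simp add: algebra_simps)
  also have "\<dots> \<le> 0" using assms by (simp add: mult_nonpos_nonneg)
  finally show ?thesis using True assms by simp
next
  case False
  have "X powr p - mu powr p \<ge> p * mu powr (p - 1) * (X - mu)"
  proof (rule convex_on_imp_above_tangent[where A="{0<..}"])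
    show "convex_on {0<..} (\<lambda>x. x powr p)" using powr_convex[OF assms(3)] .
    show "connected {0::real<..}" by simp
    show "mu \<in> interior {0<..}" using assms by (simp add: interior_open)
    show "X \<in> {0<..}" using assms False by simp
    show "((\<lambda>x. x powr p) has_field_derivative p * mu powr (p - 1)) (at mu within {0<..})"
      using assms by (auto intro!: derivative_eq_intros)
  qed
  then show ?thesis by simp
qed

lemma (in prob_space) lyapunov_real:
  fixes u :: "'a \<Rightarrow> real"
  assumes mn: "0 < m" "m < n" and u: "u \<in> borel_measurable M" "\<And>x. x \<in> space M \<Longrightarrow> 0 \<le> u x"
    and int: "integrable M (\<lambda>x. u x ^ n)"
  shows "integrable M (\<lambda>x. u x ^ m)"
    and "(expectation (\<lambda>x. u x ^ m)) ^ n \<le> (expectation (\<lambda>x. u x ^ n)) ^ m"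
proof -
  have b: "norm (u x ^ m) \<le> norm (1 + u x ^ n)" if "x \<in> space M" for x
  proof (cases "u x \<le> 1")
    case True
    then have "u x ^ m \<le> 1" using u(2)[OF that] by (simp add: power_le_one)
    moreover have "0 \<le> u x ^ n" "0 \<le> u x ^ m" using u(2)[OF that] by simp_all
    ultimately show ?thesis by simp
  next
    case False
    then have "u x ^ m \<le> u x ^ n" using mn by (intro power_increasing) auto
    then show ?thesis using u(2)[OF that] by simp
  qed
  show im: "integrable M (\<lambda>x. u x ^ m)"
    by (rule Bochner_Integration.integrable_bound[where f="\<lambda>x. 1 + u x ^ n"])
       (use int u b in auto)
  define mu where "mu = expectation (\<lambda>x. u x ^ m)"
  define p where "p = real n / real m"
  have p1: "1 \<le> p" using mn by (simp add: p_def)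
  have mu0: "0 \<le> mu" unfolding mu_def using u by (intro integral_nonneg_AE) auto
  have en0: "0 \<le> expectation (\<lambda>x. u x ^ n)" using u by (intro integral_nonneg_AE) auto
  show "(expectation (\<lambda>x. u x ^ m)) ^ n \<le> (expectation (\<lambda>x. u x ^ n)) ^ m"
  proof (cases "mu = 0")
    case True
    then show ?thesis using mn en0 unfolding mu_def by (simp add: power_0_left)
  next
    case False
    then have mup: "0 < mu" using mu0 by simp
    have "expectation (\<lambda>x. mu powr p + p * mu powr (p - 1) * (u x ^ m - mu)) \<le> expectation (\<lambda>x. u x ^ n)"
    proof (rule integral_mono)
      show "integrable M (\<lambda>x. mu powr p + p * mu powr (p - 1) * (u x ^ m - mu))"
        using im by auto
      show "integrable M (\<lambda>x. u x ^ n)" by (rule int)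
      fix x assume "x \<in> space M"
      then have "mu powr p + p * mu powr (p - 1) * (u x ^ m - mu) \<le> (u x ^ m) powr p"
        using tangent_powr[OF mup _ p1] u by simp
      also have "\<dots> = u x ^ n" using pow_powr_div u \<open>x \<in> space M\<close> mn unfolding p_def by simp
      finally show "mu powr p + p * mu powr (p - 1) * (u x ^ m - mu) \<le> u x ^ n" .
    qed
    moreover have "expectation (\<lambda>x. mu powr p + p * mu powr (p - 1) * (u x ^ m - mu)) = mu powr p"
      using im by (simp add: prob_space mu_def)
    ultimately have "mu powr p \<le> expectation (\<lambda>x. u x ^ n)" by simp
    then have "(mu powr p) ^ m \<le> (expectation (\<lambda>x. u x ^ n)) ^ m"
      by (intro power_mono) auto
    then show ?thesis using powr_div_pow[OF mu0 mn(1), of n] mn unfolding p_def mu_def by simp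
  qed
qed

lemma (in prob_space) lyapunov_ennreal:
  fixes u :: "'a \<Rightarrow> real"
  assumes mn: "0 < m" "m < n" and u: "u \<in> borel_measurable M" "\<And>x. x \<in> space M \<Longrightarrow> 0 \<le> u x"
  shows "(\<integral>\<^sup>+x. ennreal (u x ^ m) \<partial>M) ^ n \<le> (\<integral>\<^sup>+x. ennreal (u x ^ n) \<partial>M) ^ m"
proof (cases "(\<integral>\<^sup>+x. ennreal (u x ^ n) \<partial>M) = top")
  case True
  then show ?thesis using mn by (simp add: power_eq_top_ennreal)
next
  case False
  have int: "integrable M (\<lambda>x. u x ^ n)"
    using False u by (intro integrableI_nonneg) (auto simp: top.not_eq_extremum)
  note L = lyapunov_real[OF mn u int]
  have e1: "(\<integral>\<^sup>+x. ennreal (u x ^ m) \<partial>M) = ennreal (expectation (\<lambda>x. u x ^ m))"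
    using L(1) u by (intro nn_integral_eq_integral) auto
  have e2: "(\<integral>\<^sup>+x. ennreal (u x ^ n) \<partial>M) = ennreal (expectation (\<lambda>x. u x ^ n))"
    using int u by (intro nn_integral_eq_integral) auto
  have "0 \<le> expectation (\<lambda>x. u x ^ m)" using u by (intro integral_nonneg_AE) auto
  moreover have "0 \<le> expectation (\<lambda>x. u x ^ n)" using u by (intro integral_nonneg_AE) auto
  ultimately show ?thesis unfolding e1 e2 using L(2)
    by (simp add: ennreal_power ennreal_le_iff)
qed

lemma measurable_Complex_pair[measurable]:
  "(\<lambda>p. Complex (fst p) (snd p)) \<in> borel_measurable (lborel \<Otimes>\<^sub>M lborel)"
proof -
  have "(\<lambda>p. complex_of_real (fst p) + \<i> * complex_of_real (snd p)) \<in> borel_measurable (lborel \<Otimes>\<^sub>M lborel)"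
    by measurable
  then show ?thesis by (simp add: Complex_eq)
qed

lemma lborel_complex:
  "(lborel :: complex measure) = distr (lborel \<Otimes>\<^sub>M lborel) borel (\<lambda>p. Complex (fst p) (snd p))"
proof (rule lborel_eqI)
  fix l u :: complex assume lu: "\<And>b. b \<in> Basis \<Longrightarrow> l \<bullet> b \<le> u \<bullet> b"
  have le: "Re l \<le> Re u" "Im l \<le> Im u" using lu[of 1] lu[of \<i>] by (auto simp: Basis_complex_def)
  have pre: "(\<lambda>p. Complex (fst p) (snd p)) -` box l u \<inter> space (lborel \<Otimes>\<^sub>M lborel)
      = {Re l<..<Re u} \<times> {Im l<..<Im u}"
    by (auto simp: box_def Basis_complex_def space_pair_measure)
  have "emeasure (distr (lborel \<Otimes>\<^sub>M lborel) borel (\<lambda>p. Complex (fst p) (snd p))) (box l u)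
      = emeasure (lborel \<Otimes>\<^sub>M lborel) ({Re l<..<Re u} \<times> {Im l<..<Im u})"
    by (subst emeasure_distr) (simp_all add: pre)
  also have "\<dots> = ennreal (Re u - Re l) * ennreal (Im u - Im l)"
    using le by (simp add: lborel.emeasure_pair_measure_Times)
  also have "\<dots> = (\<Prod>b\<in>Basis. (u - l) \<bullet> b)"
    using le by (simp add: Basis_complex_def ennreal_mult)
  finally show "emeasure (distr (lborel \<Otimes>\<^sub>M lborel) borel (\<lambda>p. Complex (fst p) (snd p))) (box l u)
      = (\<Prod>b\<in>Basis. (u - l) \<bullet> b)" .
qed simp

lemma nn_integral_complex_pair:
  fixes G :: "complex \<Rightarrow> ennreal"
  assumes [measurable]: "G \<in> borel_measurable borel"
  shows "(\<integral>\<^sup>+z. G z \<partial>lborel) = (\<integral>\<^sup>+p. G (Complex (fst p) (snd p)) \<partial>(lborel \<Otimes>\<^sub>M lborel))"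
  by (subst lborel_complex) (simp add: nn_integral_distr)

lemma shear1:
  fixes K :: "real \<times> real \<Rightarrow> ennreal"
  assumes K[measurable]: "K \<in> borel_measurable (lborel \<Otimes>\<^sub>M lborel)"
  shows "(\<integral>\<^sup>+p. K (fst p + a * snd p, snd p) \<partial>(lborel \<Otimes>\<^sub>M lborel)) = (\<integral>\<^sup>+p. K p \<partial>(lborel \<Otimes>\<^sub>M lborel))"
proof -
  have m1: "(\<lambda>p. K (fst p + a * snd p, snd p)) \<in> borel_measurable (lborel \<Otimes>\<^sub>M lborel)"
    by measurable
  have "(\<integral>\<^sup>+p. K (fst p + a * snd p, snd p) \<partial>(lborel \<Otimes>\<^sub>M lborel))
      = (\<integral>\<^sup>+y. \<integral>\<^sup>+x. K (x + a * y, y) \<partial>lborel \<partial>lborel)"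
    using lborel_pair.nn_integral_snd[OF m1] by simp
  also have "\<dots> = (\<integral>\<^sup>+y. \<integral>\<^sup>+x. K (x, y) \<partial>lborel \<partial>lborel)"
  proof (rule nn_integral_cong)
    fix y :: real
    have [measurable]: "(\<lambda>x. K (x, y)) \<in> borel_measurable lborel" by measurable
    show "(\<integral>\<^sup>+x. K (x + a * y, y) \<partial>lborel) = (\<integral>\<^sup>+x. K (x, y) \<partial>lborel)"
      using nn_integral_real_affine[of "\<lambda>x. K (x, y)" 1 "a * y"] by (simp add: add.commute)
  qed
  also have "\<dots> = (\<integral>\<^sup>+p. K p \<partial>(lborel \<Otimes>\<^sub>M lborel))"
    using lborel_pair.nn_integral_snd[OF K] by simp
  finally show ?thesis .
qed

lemma shear2:
  fixes K :: "real \<times> real \<Rightarrow> ennreal"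
  assumes K[measurable]: "K \<in> borel_measurable (lborel \<Otimes>\<^sub>M lborel)"
  shows "(\<integral>\<^sup>+p. K (fst p, snd p + b * fst p) \<partial>(lborel \<Otimes>\<^sub>M lborel)) = (\<integral>\<^sup>+p. K p \<partial>(lborel \<Otimes>\<^sub>M lborel))"
proof -
  have m1: "(\<lambda>p. K (fst p, snd p + b * fst p)) \<in> borel_measurable (lborel \<Otimes>\<^sub>M lborel)"
    by measurable
  have "(\<integral>\<^sup>+p. K (fst p, snd p + b * fst p) \<partial>(lborel \<Otimes>\<^sub>M lborel))
      = (\<integral>\<^sup>+x. \<integral>\<^sup>+y. K (x, y + b * x) \<partial>lborel \<partial>lborel)"
    using lborel.nn_integral_fst[OF m1] by simp
  also have "\<dots> = (\<integral>\<^sup>+x. \<integral>\<^sup>+y. K (x, y) \<partial>lborel \<partial>lborel)"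
  proof (rule nn_integral_cong)
    fix x :: real
    have [measurable]: "(\<lambda>y. K (x, y)) \<in> borel_measurable lborel" by measurable
    show "(\<integral>\<^sup>+y. K (x, y + b * x) \<partial>lborel) = (\<integral>\<^sup>+y. K (x, y) \<partial>lborel)"
      using nn_integral_real_affine[of "\<lambda>y. K (x, y)" 1 "b * x"] by (simp add: add.commute)
  qed
  also have "\<dots> = (\<integral>\<^sup>+p. K p \<partial>(lborel \<Otimes>\<^sub>M lborel))"
    using lborel.nn_integral_fst[OF K] by simp
  finally show ?thesis .
qed

lemma rotation_invariant_aux:
  fixes G :: "complex \<Rightarrow> ennreal"
  assumes G[measurable]: "G \<in> borel_measurable borel" and w: "norm w = 1" "w \<noteq> -1"
  shows "(\<integral>\<^sup>+z. G (w * z) \<partial>lborel) = (\<integral>\<^sup>+z. G z \<partial>lborel)"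
proof -
  define c where "c = Re w"
  define s where "s = Im w"
  have cs: "c^2 + s^2 = 1" using w(1) unfolding c_def s_def by (simp add: cmod_def)
  have c1: "1 + c \<noteq> 0"
  proof
    assume "1 + c = 0"
    then have "c = -1" by simp
    then have "s = 0" using cs by simp
    then have "w = -1" using \<open>c = -1\<close> unfolding c_def s_def by (simp add: complex_eq_iff)
    then show False using w(2) by simp
  qed
  define t where "t = s / (1 + c)"
  define K where "K = (\<lambda>p. G (Complex (fst p) (snd p)))"
  have K[measurable]: "K \<in> borel_measurable (lborel \<Otimes>\<^sub>M lborel)" unfolding K_def by measurable
  define K2 where "K2 = (\<lambda>p. K (fst p + (-t) * snd p, snd p))"
  have K2[measurable]: "K2 \<in> borel_measurable (lborel \<Otimes>\<^sub>M lborel)" unfolding K2_def by measurable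
  define K1 where "K1 = (\<lambda>p. K2 (fst p, snd p + s * fst p))"
  have K1[measurable]: "K1 \<in> borel_measurable (lborel \<Otimes>\<^sub>M lborel)" unfolding K1_def by measurable
  have Gw[measurable]: "(\<lambda>z. G (w * z)) \<in> borel_measurable borel" by measurable
  have rot: "G (w * Complex x y) = K1 (x + (-t) * y, y)" for x y
  proof -
    have e1: "1 - t * s = c"
      using c1 cs unfolding t_def by (simp add: field_simps power2_eq_square)
    have e2: "t * (1 + c) = s" using c1 unfolding t_def by simp
    have "w * Complex x y = Complex (c * x - s * y) (s * x + c * y)"
      unfolding c_def s_def by (simp add: complex_eq_iff)
    moreover have i1: "y + s * (x + - t * y) = s * x + c * y"
    proof -
      have "y + s * (x + - t * y) = s * x + (1 - t * s) * y" by (simp add: algebra_simps)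
      then show ?thesis using e1 by simp
    qed
    moreover have "x + - t * y + - t * (s * x + c * y) = c * x - s * y"
    proof -
      have "x + - t * y + - t * (s * x + c * y) = (1 - t * s) * x - (t * (1 + c)) * y"
        by (simp add: algebra_simps)
      then show ?thesis using e1 e2 by simp
    qed
    ultimately show ?thesis unfolding K1_def K2_def K_def by simp
  qed
  have "(\<integral>\<^sup>+z. G (w * z) \<partial>lborel) = (\<integral>\<^sup>+p. G (w * Complex (fst p) (snd p)) \<partial>(lborel \<Otimes>\<^sub>M lborel))"
    by (rule nn_integral_complex_pair[OF Gw])
  also have "\<dots> = (\<integral>\<^sup>+p. K1 (fst p + (-t) * snd p, snd p) \<partial>(lborel \<Otimes>\<^sub>M lborel))"
    by (simp add: rot)
  also have "\<dots> = (\<integral>\<^sup>+p. K1 p \<partial>(lborel \<Otimes>\<^sub>M lborel))" by (rule shear1[OF K1])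
  also have "\<dots> = (\<integral>\<^sup>+p. K2 p \<partial>(lborel \<Otimes>\<^sub>M lborel))" unfolding K1_def by (rule shear2[OF K2])
  also have "\<dots> = (\<integral>\<^sup>+p. K p \<partial>(lborel \<Otimes>\<^sub>M lborel))" unfolding K2_def by (rule shear1[OF K])
  also have "\<dots> = (\<integral>\<^sup>+z. G z \<partial>lborel)" unfolding K_def by (rule nn_integral_complex_pair[OF G, symmetric])
  finally show ?thesis .
qed

lemma rotation_invariant:
  fixes G :: "complex \<Rightarrow> ennreal"
  assumes G[measurable]: "G \<in> borel_measurable borel" and w: "norm w = 1"
  shows "(\<integral>\<^sup>+z. G (w * z) \<partial>lborel) = (\<integral>\<^sup>+z. G z \<partial>lborel)"
proof (cases "w = -1")
  case False then show ?thesis using rotation_invariant_aux[OF G w] by simp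
next
  case True
  have Gi[measurable]: "(\<lambda>z. G (\<i> * z)) \<in> borel_measurable borel" by measurable
  have i1: "\<i> \<noteq> (-1::complex)" by (simp add: complex_eq_iff)
  have n1: "norm \<i> = 1" by simp
  have "(\<integral>\<^sup>+z. G (\<i> * (\<i> * z)) \<partial>lborel) = (\<integral>\<^sup>+z. G (\<i> * z) \<partial>lborel)"
    by (rule rotation_invariant_aux[OF Gi n1 i1])
  also have "\<dots> = (\<integral>\<^sup>+z. G z \<partial>lborel)"
    by (rule rotation_invariant_aux[OF G n1 i1])
  finally have *: "(\<integral>\<^sup>+z. G (\<i> * (\<i> * z)) \<partial>lborel) = (\<integral>\<^sup>+z. G z \<partial>lborel)" .
  have "\<And>z. \<i> * (\<i> * z) = w * z" using True by (simp add: mult.assoc[symmetric])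
  then show ?thesis using * by simp
qed

lemma cis_2pi_exp: "cis (2 * pi * s) = exp (2 * of_real pi * \<i> * of_real s)"
  by (simp add: cis_conv_exp mult.commute mult.left_commute)

lemma circ_cont:
  assumes "F holomorphic_on ball 0 1" "norm z < 1"
  shows "continuous_on UNIV (\<lambda>s::real. F (z * cis (2 * pi * s)))"
proof (rule continuous_on_compose2[of "ball 0 1" F])
  show "continuous_on (ball 0 1) F" using assms(1) by (rule holomorphic_on_imp_continuous_on)
  show "continuous_on UNIV (\<lambda>s::real. z * cis (2 * pi * s))" by (intro continuous_intros)
  show "(\<lambda>s::real. z * cis (2 * pi * s)) ` UNIV \<subseteq> ball 0 1" using assms(2) by (auto simp: norm_mult)
qed

lemma circle_mean:
  assumes F: "F holomorphic_on ball 0 1" and z: "norm z < 1"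
  shows "((\<lambda>s. F (z * cis (2 * pi * s))) has_integral F 0) {0..1}"
proof (cases "z = 0")
  case True
  then show ?thesis using has_integral_const_real[of "F 0" 0 1] by simp
next
  case False
  define R where "R = 1 / norm z"
  have R1: "1 < R" using False z by (simp add: R_def)
  define g where "g = (\<lambda>w. F (z * w))"
  have gh: "g holomorphic_on ball 0 R"
  proof -
    have "((\<lambda>w. z * w) ` ball 0 R) \<subseteq> ball 0 1"
    proof
      fix y assume "y \<in> (\<lambda>w. z * w) ` ball 0 R"
      then obtain w where w: "norm w < R" "y = z * w" by auto
      have "norm y = norm z * norm w" using w by (simp add: norm_mult)
      also have "\<dots> < norm z * R" using w False by simp
      also have "\<dots> = 1" using False by (simp add: R_def)
      finally show "y \<in> ball 0 1" by simp
    qed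
    moreover have "(\<lambda>w. z * w) holomorphic_on ball 0 R" by (intro holomorphic_intros)
    ultimately have "(F \<circ> (\<lambda>w. z * w)) holomorphic_on ball 0 R"
      using holomorphic_on_compose_gen F by blast
    then show ?thesis by (simp add: g_def o_def)
  qed
  have "cball 0 1 \<subseteq> ball (0::complex) R" using R1 by auto
  then have gc: "continuous_on (cball 0 1) g" and gh1: "g holomorphic_on ball 0 1"
    using gh holomorphic_on_imp_continuous_on holomorphic_on_subset continuous_on_subset
    by (blast, meson ball_subset_cball holomorphic_on_subset order.trans)
  have "((\<lambda>u. g u / (u - 0)) has_contour_integral (2 * of_real pi * \<i> * g 0)) (circlepath 0 1)"
    by (rule Cauchy_integral_circlepath[OF gc gh1]) simp
  then have "((\<lambda>x. g (circlepath 0 1 x) / (circlepath 0 1 x - 0) * vector_derivative (circlepath 0 1) (at x))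
      has_integral (2 * of_real pi * \<i> * g 0)) {0..1}"
    by (simp only: has_contour_integral)
  then have "((\<lambda>x. (2 * of_real pi * \<i>) * g (exp (2 * of_real pi * \<i> * of_real x))) has_integral (2 * of_real pi * \<i> * g 0)) {0..1}"
    by (rule has_integral_eq[rotated]) (unfold vector_derivative_circlepath, simp add: circlepath field_simps)
  then have "((\<lambda>x. g (exp (2 * of_real pi * \<i> * of_real x))) has_integral g 0) {0..1}"
    by (subst (asm) has_integral_mult_right_iff) auto
  then show ?thesis by (simp add: g_def cis_2pi_exp)
qed

lemma cmod_diff_sq:
  fixes a c :: complex
  shows "(cmod (a - c))^2 = (cmod a)^2 - 2 * Re (cnj c * a) + (cmod c)^2"
  unfolding cmod_power2 by (simp add: power2_eq_square algebra_simps)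

lemma circle_ortho:
  assumes F: "F holomorphic_on ball 0 1" and z: "norm z < 1"
  shows "((\<lambda>s. (cmod (F (z * cis (2 * pi * s)) - F 0))^2) has_integral
           (integral {0..1} (\<lambda>s. (cmod (F (z * cis (2 * pi * s))))^2) - (cmod (F 0))^2)) {0..1}"
proof -
  define c where "c = F 0"
  define I where "I = integral {0..1} (\<lambda>s. (cmod (F (z * cis (2 * pi * s))))^2)"
  have cont: "continuous_on UNIV (\<lambda>s::real. F (z * cis (2 * pi * s)))" by (rule circ_cont[OF F z])
  have "continuous_on {0..1} (\<lambda>s::real. (cmod (F (z * cis (2 * pi * s))))^2)"
    by (intro continuous_intros continuous_on_subset[OF cont]) auto
  then have h1: "((\<lambda>s. (cmod (F (z * cis (2 * pi * s))))^2) has_integral I) {0..1}"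
    unfolding I_def by (intro integrable_integral integrable_continuous_interval)
  have "((\<lambda>s. cnj c * F (z * cis (2 * pi * s))) has_integral (cnj c * c)) {0..1}"
    unfolding c_def by (intro has_integral_mult_right circle_mean[OF F z])
  from has_integral_linear[OF this bounded_linear_Re]
  have "Re (cnj c * c) = (cmod c)^2" unfolding cmod_power2 by (simp add: power2_eq_square)
  then have h2: "((\<lambda>s. Re (cnj c * F (z * cis (2 * pi * s)))) has_integral (cmod c)^2) {0..1}"
    unfolding o_def by (metis (no_types, lifting) \<open>((Re \<circ> (\<lambda>s. cnj c * F (z * cis (2 * pi * s)))) has_integral Re (cnj c * c)) {0..1}\<close> comp_apply has_integral_eq)
  have h3: "((\<lambda>s::real. (cmod c)^2) has_integral (cmod c)^2) {0..1}"
    using has_integral_const_real[of "(cmod c)^2" 0 1] by simp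
  have "((\<lambda>s. (cmod (F (z * cis (2 * pi * s))))^2 - 2 * Re (cnj c * F (z * cis (2 * pi * s))) + (cmod c)^2)
      has_integral (I - 2 * (cmod c)^2 + (cmod c)^2)) {0..1}"
    by (intro has_integral_add has_integral_diff h1 h3 has_integral_mult_right[of _ _ _ 2, simplified] h2)
  then have "((\<lambda>s. (cmod (F (z * cis (2 * pi * s)) - c))^2) has_integral (I - (cmod c)^2)) {0..1}"
    by (simp add: cmod_diff_sq)
  then show ?thesis by (simp add: I_def c_def)
qed

lemma circle_nn:
  assumes F: "F holomorphic_on ball 0 1" and z: "norm z < 1"
  shows "(\<integral>\<^sup>+s\<in>{0..1}. ennreal ((cmod (F (z * cis (2 * pi * s)) - F 0))^2) \<partial>lborel)
          = ennreal (integral {0..1} (\<lambda>s. (cmod (F (z * cis (2 * pi * s))))^2) - (cmod (F 0))^2)"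
    and "(cmod (F 0))^2 \<le> integral {0..1} (\<lambda>s. (cmod (F (z * cis (2 * pi * s))))^2)"
proof -
  note h = circle_ortho[OF F z]
  show "(\<integral>\<^sup>+s\<in>{0..1}. ennreal ((cmod (F (z * cis (2 * pi * s)) - F 0))^2) \<partial>lborel)
          = ennreal (integral {0..1} (\<lambda>s. (cmod (F (z * cis (2 * pi * s))))^2) - (cmod (F 0))^2)"
    by (rule nn_integral_has_integral_lebesgue'[OF _ h]) simp
  have "0 \<le> integral {0..1} (\<lambda>s. (cmod (F (z * cis (2 * pi * s))))^2) - (cmod (F 0))^2"
    by (rule has_integral_nonneg[OF h]) simp
  then show "(cmod (F 0))^2 \<le> integral {0..1} (\<lambda>s. (cmod (F (z * cis (2 * pi * s))))^2)" by simp
qed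

lemma norm_pow_sq: "(cmod (x ^ k))^2 = ((cmod x)^2) ^ k"
  by (simp add: norm_power power_mult[symmetric] mult.commute)

lemma KP_circle:
  assumes h: "h holomorphic_on ball 0 1" and z: "norm z < 1" and mn: "0 < m" "m < n"
  shows "(\<integral>\<^sup>+s\<in>{0..1}. ennreal ((cmod (h (z * cis (2 * pi * s)) ^ m - h 0 ^ m))^2) \<partial>lborel) ^ n
       \<le> (\<integral>\<^sup>+s\<in>{0..1}. ennreal ((cmod (h (z * cis (2 * pi * s)) ^ n - h 0 ^ n))^2) \<partial>lborel) ^ m"
proof -
  define u where "u = (\<lambda>s::real. (cmod (h (z * cis (2 * pi * s))))^2)"
  define y where "y = (cmod (h 0))^2"
  have y0: "0 \<le> y" by (simp add: y_def)
  have Fk: "(\<lambda>w. h w ^ k) holomorphic_on ball 0 1" for k by (intro holomorphic_intros h)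
  define I where "I = (\<lambda>k. integral {0..1} (\<lambda>s. u s ^ k))"
  have contu: "continuous_on UNIV u" unfolding u_def
    by (intro continuous_intros circ_cont[OF h z])
  have hasI: "((\<lambda>s. u s ^ k) has_integral I k) {0..1}" for k
    unfolding I_def
    by (intro integrable_integral integrable_continuous_interval continuous_intros continuous_on_subset[OF contu]) auto
  have I0: "0 \<le> I k" for k using has_integral_nonneg[OF hasI] by (simp add: u_def)
  have Q: "(\<integral>\<^sup>+s\<in>{0..1}. ennreal ((cmod (h (z * cis (2 * pi * s)) ^ k - h 0 ^ k))^2) \<partial>lborel)
      = ennreal (I k - y ^ k)" and yI: "y ^ k \<le> I k" for k
    using circle_nn[OF Fk z, of k] by (simp_all add: norm_pow_sq u_def y_def I_def)
  define P where "P = uniform_measure lborel {0..1::real}"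
  have emP: "emeasure lborel {0..1::real} = 1" by simp
  interpret P: prob_space P unfolding P_def by (rule prob_space_uniform_measure) (simp_all add: emP)
  have um: "u \<in> borel_measurable borel" by (rule borel_measurable_continuous_onI[OF contu])
  have umP: "u \<in> borel_measurable P" unfolding P_def
    using um by (simp add: measurable_cong_sets[OF sets_uniform_measure refl])
  have intP: "(\<integral>\<^sup>+s. ennreal (u s ^ k) \<partial>P) = ennreal (I k)" for k
  proof -
    have [measurable]: "(\<lambda>s. ennreal (u s ^ k)) \<in> borel_measurable lborel" using um by simp
    have "(\<integral>\<^sup>+s. ennreal (u s ^ k) \<partial>P) = (\<integral>\<^sup>+s. ennreal (u s ^ k) * indicator {0..1} s \<partial>lborel) / 1"
      unfolding P_def by (subst nn_integral_uniform_measure) (simp_all add: emP)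
    also have "\<dots> = ennreal (I k)"
      using nn_integral_has_integral_lebesgue'[OF _ hasI[of k]] by (simp add: u_def divide_ennreal_def)
    finally show ?thesis .
  qed
  have "ennreal (I m) ^ n \<le> ennreal (I n) ^ m"
    using P.lyapunov_ennreal[OF mn umP] by (simp only: intP) (simp add: u_def)
  then have "I m ^ n \<le> I n ^ m" using I0 by (simp add: ennreal_power ennreal_le_iff)
  then have main: "(I m - y ^ m) ^ n \<le> (I n - y ^ n) ^ m"
    by (intro elem_ineq2[OF mn y0 yI I0])
  have "ennreal (I m - y ^ m) ^ n \<le> ennreal (I n - y ^ n) ^ m"
    using main yI by (simp add: ennreal_power ennreal_le_iff)
  then show ?thesis by (simp only: Q)
qed

lemma hardy_subst:
  assumes G: "continuous_on (ball 0 1) G" and r: "0 \<le> r" "r < 1"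
  shows "ennreal (1 / (2 * pi)) * (\<integral>\<^sup>+t\<in>{0..2 * pi}. ennreal ((cmod (G (complex_of_real r * cis t)))\<^sup>2) \<partial>lborel)
       = (\<integral>\<^sup>+s\<in>{0..1}. ennreal ((cmod (G (complex_of_real r * cis (2 * pi * s))))\<^sup>2) \<partial>lborel)"
proof -
  have cont: "continuous_on UNIV (\<lambda>t::real. G (complex_of_real r * cis t))"
    by (rule continuous_on_compose2[OF G]) (auto intro!: continuous_intros simp: norm_mult r)
  define phi where "phi = (\<lambda>t::real. ennreal ((cmod (G (complex_of_real r * cis t)))\<^sup>2) * indicator {0..2 * pi} t)"
  have [measurable]: "(\<lambda>t::real. ennreal ((cmod (G (complex_of_real r * cis t)))\<^sup>2)) \<in> borel_measurable borel"
    by (intro measurable_compose[OF borel_measurable_continuous_onI[OF cont]]) measurable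
  have pm[measurable]: "phi \<in> borel_measurable borel" unfolding phi_def by measurable
  have e1: "(0 \<le> 2 * pi * x) = (0 \<le> x)" for x using mult_le_cancel_left_pos[of "2*pi" 0 x] by simp
  have e2: "(2 * pi * x \<le> 2 * pi) = (x \<le> 1)" for x using mult_le_cancel_left_pos[of "2*pi" x 1] by simp
  have "(\<integral>\<^sup>+t. phi t \<partial>lborel) = ennreal \<bar>2 * pi\<bar> * (\<integral>\<^sup>+x. phi (0 + (2 * pi) * x) \<partial>lborel)"
    by (rule nn_integral_real_affine[OF pm]) simp
  also have "(\<lambda>x. phi (0 + (2 * pi) * x)) = (\<lambda>x. ennreal ((cmod (G (complex_of_real r * cis (2 * pi * x))))\<^sup>2) * indicator {0..1} x)"
    by (simp add: phi_def indicator_def fun_eq_iff e1 e2)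
  finally have "(\<integral>\<^sup>+t. phi t \<partial>lborel) = ennreal (2 * pi) *
      (\<integral>\<^sup>+x. ennreal ((cmod (G (complex_of_real r * cis (2 * pi * x))))\<^sup>2) * indicator {0..1} x \<partial>lborel)"
    by simp
  then have "ennreal (1 / (2 * pi)) * (\<integral>\<^sup>+t. phi t \<partial>lborel) = (ennreal (1 / (2 * pi)) * ennreal (2 * pi)) *
      (\<integral>\<^sup>+x. ennreal ((cmod (G (complex_of_real r * cis (2 * pi * x))))\<^sup>2) * indicator {0..1} x \<partial>lborel)"
    by (simp add: mult.assoc)
  also have "ennreal (1 / (2 * pi)) * ennreal (2 * pi) = 1"
    by (simp flip: ennreal_mult)
  finally show ?thesis by (simp add: phi_def)
qed

lemma PH:
  assumes h: "h holomorphic_on ball 0 1" and mn: "0 < m" "m < n"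
  shows "hardy_norm (\<lambda>z. h z ^ m - h 0 ^ m) ^ n \<le> hardy_norm (\<lambda>z. h z ^ n - h 0 ^ n) ^ m"
  unfolding hardy_norm_def
proof (intro ennroot2_pow_le SUP_pow_le)
  show "0 < n" using mn by simp
  fix r assume r: "r \<in> {0..<1::real}"
  have hc: "continuous_on (ball 0 1) (\<lambda>z. h z ^ k - h 0 ^ k)" for k
    by (intro continuous_intros holomorphic_on_imp_continuous_on[OF h])
  have nr: "norm (complex_of_real r) < 1" using r by simp
  show "(ennreal (1 / (2 * pi)) * (\<integral>\<^sup>+t\<in>{0..2 * pi}. ennreal ((cmod (h (complex_of_real r * cis t) ^ m - h 0 ^ m))\<^sup>2) \<partial>lborel)) ^ n
      \<le> (ennreal (1 / (2 * pi)) * (\<integral>\<^sup>+t\<in>{0..2 * pi}. ennreal ((cmod (h (complex_of_real r * cis t) ^ n - h 0 ^ n))\<^sup>2) \<partial>lborel)) ^ m"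
    using hardy_subst[OF hc[of m], of r] hardy_subst[OF hc[of n], of r] r KP_circle[OF h nr mn]
    by simp
qed

lemma cis_measurable[measurable]: "(\<lambda>s::real. cis (2 * pi * s)) \<in> borel_measurable borel"
  by (intro borel_measurable_continuous_onI continuous_intros)

lemma emeasure_unit_disc: "emeasure lborel (ball (0::complex) 1) = ennreal pi"
  using emeasure_ball[where c="0::complex" and r=1] by (simp add: unit_ball_vol_2)

lemma KP_bergman:
  assumes h: "h holomorphic_on ball 0 1" and mn: "0 < m" "m < n"
  shows "(ennreal (1 / pi) * (\<integral>\<^sup>+z\<in>ball 0 1. ennreal ((cmod (h z ^ m - h 0 ^ m))\<^sup>2) \<partial>lborel)) ^ n
       \<le> (ennreal (1 / pi) * (\<integral>\<^sup>+z\<in>ball 0 1. ennreal ((cmod (h z ^ n - h 0 ^ n))\<^sup>2) \<partial>lborel)) ^ m"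
proof -
  define D where "D = ball (0::complex) 1"
  have Dm[measurable]: "D \<in> sets borel" unfolding D_def by simp
  define g where "g = (\<lambda>k z. (cmod (h z ^ k - h 0 ^ k))\<^sup>2)"
  have gc: "continuous_on D (g k)" for k
    unfolding g_def D_def by (intro continuous_intros holomorphic_on_imp_continuous_on[OF h])
  define H where "H = (\<lambda>k z. ennreal (indicator D z * g k z))"
  have Hm[measurable]: "H k \<in> borel_measurable borel" for k
  proof -
    have [measurable]: "(\<lambda>z. indicator D z * g k z) \<in> borel_measurable borel"
      using borel_measurable_continuous_on_indicator[OF Dm gc] by simp
    show ?thesis unfolding H_def by measurable
  qed
  have H_eq: "(\<integral>\<^sup>+z\<in>D. ennreal (g k z) \<partial>lborel) = (\<integral>\<^sup>+z. H k z \<partial>lborel)" for k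
    by (rule nn_integral_cong) (simp add: H_def indicator_def)
  define R where "R = (\<lambda>k (p::complex \<times> real). H k (cis (2 * pi * snd p) * fst p) * indicator {0..1} (snd p))"
  have Rm[measurable]: "R k \<in> borel_measurable (lborel \<Otimes>\<^sub>M lborel)" for k
    unfolding R_def by measurable
  define Q where "Q = (\<lambda>k z. \<integral>\<^sup>+s. R k (z, s) \<partial>lborel)"
  have Qm[measurable]: "Q k \<in> borel_measurable lborel" for k
    unfolding Q_def by (rule lborel.borel_measurable_nn_integral_fst[OF Rm])
  have int_H: "(\<integral>\<^sup>+z. H k z \<partial>lborel) = (\<integral>\<^sup>+z. Q k z \<partial>lborel)" for k
  proof -
    have "(\<integral>\<^sup>+z. H k z \<partial>lborel) = (\<integral>\<^sup>+(s::real). (\<integral>\<^sup>+z. H k z \<partial>lborel) * indicator {0..1} s \<partial>lborel)"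
      by (subst nn_integral_cmult_indicator) simp_all
    also have "\<dots> = (\<integral>\<^sup>+s. (\<integral>\<^sup>+z. H k (cis (2 * pi * s) * z) \<partial>lborel) * indicator {0..1} s \<partial>lborel)"
      by (rule nn_integral_cong) (simp add: rotation_invariant[OF Hm])
    also have "\<dots> = (\<integral>\<^sup>+s. (\<integral>\<^sup>+z. R k (z, s) \<partial>lborel) \<partial>lborel)"
      by (rule nn_integral_cong) (simp add: R_def nn_integral_multc)
    also have "\<dots> = (\<integral>\<^sup>+z. Q k z \<partial>lborel)"
      unfolding Q_def by (rule lborel_pair.Fubini') (simp add: Rm)
    finally show ?thesis .
  qed
  have Q_out: "Q k z = 0" if "z \<notin> D" for k z
  proof -
    have "R k (z, s) = 0" for s using that by (simp add: R_def H_def D_def norm_mult)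
    then show ?thesis by (simp add: Q_def)
  qed
  have Q_in: "Q k z = (\<integral>\<^sup>+s\<in>{0..1}. ennreal ((cmod (h (z * cis (2 * pi * s)) ^ k - h 0 ^ k))\<^sup>2) \<partial>lborel)"
    if "z \<in> D" for k z
    unfolding Q_def using that
    by (intro nn_integral_cong) (simp add: R_def H_def D_def g_def norm_mult mult.commute)
  have Fk: "(\<lambda>w. h w ^ k) holomorphic_on ball 0 1" for k by (intro holomorphic_intros h)
  have Q_fin: "Q k z < top" for k z
  proof (cases "z \<in> D")
    case True
    then have "norm z < 1" by (simp add: D_def)
    from circle_nn(1)[OF Fk this, of k] show ?thesis using Q_in[OF True, of k] by simp
  next
    case False then show ?thesis using Q_out by simp
  qed
  define u where "u = (\<lambda>z. root n (enn2real (Q n z)))"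
  have um[measurable]: "u \<in> borel_measurable lborel" unfolding u_def by measurable
  have u0: "0 \<le> u z" for z by (simp add: u_def real_root_ge_zero)
  have Qn: "Q n z = ennreal (u z ^ n)" for z
  proof -
    have "u z ^ n = enn2real (Q n z)" using mn by (simp add: u_def real_root_pow_pos2)
    then show ?thesis using Q_fin[of n z] by (simp add: less_top)
  qed
  have u_out: "u z = 0" if "z \<notin> D" for z using Q_out[OF that] by (simp add: u_def)
  have Qm: "Q m z \<le> ennreal (u z ^ m)" for z
  proof (cases "z \<in> D")
    case False then show ?thesis using Q_out by simp
  next
    case True
    then have nz: "norm z < 1" by (simp add: D_def)
    define a where "a = enn2real (Q m z)"
    have a0: "0 \<le> a" by (simp add: a_def)
    have Qa: "Q m z = ennreal a" using Q_fin[of m z] by (simp add: a_def less_top)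
    have "Q m z ^ n \<le> Q n z ^ m" using KP_circle[OF h nz mn] Q_in[OF True] by simp
    then have "ennreal (a ^ n) \<le> ennreal ((u z ^ n) ^ m)"
      using a0 u0 by (simp add: Qa Qn ennreal_power)
    then have "a ^ n \<le> (u z ^ m) ^ n" using u0 by (simp add: ennreal_le_iff power_mult[symmetric] mult.commute)
    then have "a \<le> u z ^ m" using a0 u0 mn power_mono_iff[of a "u z ^ m" n] by simp
    then show ?thesis using Qa by (simp add: ennreal_leI)
  qed
  define P where "P = uniform_measure lborel D"
  have emD: "emeasure lborel D = ennreal pi" unfolding D_def by (rule emeasure_unit_disc)
  interpret P: prob_space P unfolding P_def by (rule prob_space_uniform_measure) (simp_all add: emD)
  have umP: "u \<in> borel_measurable P" unfolding P_def
    using um by (simp add: measurable_cong_sets[OF sets_uniform_measure refl])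
  have intP: "(\<integral>\<^sup>+z. ennreal (u z ^ k) \<partial>P) = ennreal (1 / pi) * (\<integral>\<^sup>+z. ennreal (u z ^ k) \<partial>lborel)"
    if "0 < k" for k
  proof -
    have "(\<integral>\<^sup>+z. ennreal (u z ^ k) \<partial>P) = (\<integral>\<^sup>+z. ennreal (u z ^ k) * indicator D z \<partial>lborel) / ennreal pi"
      unfolding P_def by (subst nn_integral_uniform_measure) (simp_all add: emD)
    also have "(\<integral>\<^sup>+z. ennreal (u z ^ k) * indicator D z \<partial>lborel) = (\<integral>\<^sup>+z. ennreal (u z ^ k) \<partial>lborel)"
      by (rule nn_integral_cong) (use u_out that in \<open>auto simp: indicator_def\<close>)
    finally show ?thesis by (simp add: divide_ennreal_def inverse_ennreal mult.commute inverse_eq_divide)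
  qed
  have Bn: "ennreal (1 / pi) * (\<integral>\<^sup>+z\<in>ball 0 1. ennreal ((cmod (h z ^ n - h 0 ^ n))\<^sup>2) \<partial>lborel)
      = (\<integral>\<^sup>+z. ennreal (u z ^ n) \<partial>P)"
    using H_eq[of n] int_H[of n] intP[of n] mn by (simp add: D_def g_def Qn)
  have "(\<integral>\<^sup>+z\<in>ball 0 1. ennreal ((cmod (h z ^ m - h 0 ^ m))\<^sup>2) \<partial>lborel) = (\<integral>\<^sup>+z. Q m z \<partial>lborel)"
    using H_eq[of m] int_H[of m] by (simp add: D_def g_def)
  also have "\<dots> \<le> (\<integral>\<^sup>+z. ennreal (u z ^ m) \<partial>lborel)" by (intro nn_integral_mono Qm)
  finally have Bm: "ennreal (1 / pi) * (\<integral>\<^sup>+z\<in>ball 0 1. ennreal ((cmod (h z ^ m - h 0 ^ m))\<^sup>2) \<partial>lborel)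
      \<le> (\<integral>\<^sup>+z. ennreal (u z ^ m) \<partial>P)"
    using intP[of m] mn by (simp add: mult_left_mono)
  have "(ennreal (1 / pi) * (\<integral>\<^sup>+z\<in>ball 0 1. ennreal ((cmod (h z ^ m - h 0 ^ m))\<^sup>2) \<partial>lborel)) ^ n
      \<le> (\<integral>\<^sup>+z. ennreal (u z ^ m) \<partial>P) ^ n" using Bm by (simp add: power_mono)
  also have "\<dots> \<le> (\<integral>\<^sup>+z. ennreal (u z ^ n) \<partial>P) ^ m"
    by (rule P.lyapunov_ennreal[OF mn umP]) (simp add: u0)
  finally show ?thesis using Bn by simp
qed

lemma PB:
  assumes h: "h holomorphic_on ball 0 1" and mn: "0 < m" "m < n"
  shows "bergman_norm (\<lambda>z. h z ^ m - h 0 ^ m) ^ n \<le> bergman_norm (\<lambda>z. h z ^ n - h 0 ^ n) ^ m"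
  unfolding bergman_norm_def by (intro ennroot2_pow_le KP_bergman[OF h mn])

lemma disc_phi_eq: "disc_phi a z = - Moebius_function 0 a z"
  by (simp add: disc_phi_def Moebius_function_simple minus_divide_left)

lemma disc_phi_0: "disc_phi a 0 = a"
  by (simp add: disc_phi_def)

lemma disc_phi_hol: "norm a < 1 \<Longrightarrow> disc_phi a holomorphic_on ball 0 1"
  unfolding disc_phi_eq[abs_def] by (intro holomorphic_intros Moebius_function_holomorphic)

lemma disc_phi_norm: "norm a < 1 \<Longrightarrow> norm z < 1 \<Longrightarrow> norm (disc_phi a z) < 1"
  unfolding disc_phi_eq using Moebius_function_norm_lt_1 by simp

lemma comp_hol:
  assumes f: "f holomorphic_on ball 0 1" and a: "a \<in> ball 0 1"
  shows "(\<lambda>z. f (disc_phi a z)) holomorphic_on ball 0 1"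
proof -
  have "(f \<circ> disc_phi a) holomorphic_on ball 0 1"
    using a by (intro holomorphic_on_compose_gen[OF disc_phi_hol f]) (auto simp: disc_phi_norm)
  then show ?thesis by (simp add: o_def)
qed

lemma small_transfer:
  fixes X Y :: ennreal
  assumes "X ^ n \<le> Y ^ m" "Y < ennreal (root m (e ^ n))" "0 < m" "0 < n" "0 < e"
  shows "X < ennreal e"
proof (rule ccontr)
  assume "\<not> X < ennreal e"
  then have "ennreal e ^ n \<le> X ^ n" by (simp add: power_mono)
  also have "\<dots> \<le> Y ^ m" by (rule assms(1))
  also have "\<dots> < ennreal (root m (e ^ n)) ^ m" by (rule ennreal_pow_less[OF assms(2,3)])
  also have "\<dots> = ennreal (e ^ n)"
    using assms by (simp add: ennreal_power real_root_ge_zero real_root_pow_pos2)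
  finally show False using assms by (simp add: ennreal_power)
qed

lemma int_pow_fin:
  fixes f :: "'a \<Rightarrow> complex"
  assumes meas: "(\<lambda>x. ennreal ((cmod (f x ^ n))\<^sup>2) * indicator A x) \<in> borel_measurable M"
    and A: "A \<in> sets M" and mn: "m < n"
  shows "(\<integral>\<^sup>+x\<in>A. ennreal ((cmod (f x ^ m))\<^sup>2) \<partial>M) \<le> emeasure M A + (\<integral>\<^sup>+x\<in>A. ennreal ((cmod (f x ^ n))\<^sup>2) \<partial>M)"
proof -
  have pt: "ennreal ((cmod (f x ^ m))\<^sup>2) * indicator A x \<le> indicator A x + ennreal ((cmod (f x ^ n))\<^sup>2) * indicator A x" for x
  proof -
    define t where "t = (cmod (f x))\<^sup>2"
    have t0: "0 \<le> t" by (simp add: t_def)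
    have "t ^ m \<le> 1 + t ^ n"
    proof (cases "t \<le> 1")
      case True
      then have "t ^ m \<le> 1" using t0 by (simp add: power_le_one)
      then show ?thesis using t0 by (simp add: add_increasing2)
    next
      case False
      then have "t ^ m \<le> t ^ n" using mn by (intro power_increasing) auto
      then show ?thesis by simp
    qed
    then have "ennreal (t ^ m) \<le> ennreal (1 + t ^ n)" by (rule ennreal_leI)
    also have "ennreal (1 + t ^ n) = 1 + ennreal (t ^ n)" using t0 by (simp add: ennreal_plus)
    finally have "ennreal (t ^ m) \<le> 1 + ennreal (t ^ n)" .
    then show ?thesis
      by (cases "x \<in> A") (simp_all add: t_def norm_pow_sq)
  qed
  have "(\<integral>\<^sup>+x\<in>A. ennreal ((cmod (f x ^ m))\<^sup>2) \<partial>M)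
      \<le> (\<integral>\<^sup>+x. indicator A x + ennreal ((cmod (f x ^ n))\<^sup>2) * indicator A x \<partial>M)"
    by (intro nn_integral_mono pt)
  also have "\<dots> = (\<integral>\<^sup>+x. indicator A x \<partial>M) + (\<integral>\<^sup>+x\<in>A. ennreal ((cmod (f x ^ n))\<^sup>2) \<partial>M)"
    using A meas by (intro nn_integral_add) auto
  also have "(\<integral>\<^sup>+x. indicator A x \<partial>M) = emeasure M A" using A by simp
  finally show ?thesis .
qed

lemma hardy_fin:
  assumes f: "continuous_on (ball 0 1) f" and mn: "m < n"
    and fin: "hardy_norm (\<lambda>z. f z ^ n) < top"
  shows "hardy_norm (\<lambda>z. f z ^ m) < top"
proof -
  define S where "S = (\<lambda>k. SUP r\<in>{0..<1::real}. ennreal (1 / (2 * pi)) *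
      (\<integral>\<^sup>+ t\<in>{0..2*pi}. ennreal ((cmod (f (complex_of_real r * cis t) ^ k))\<^sup>2) \<partial>lborel))"
  have hS: "hardy_norm (\<lambda>z. f z ^ k) = ennroot 2 (S k)" for k by (simp add: hardy_norm_def S_def)
  have Sn: "S n < top" using fin ennroot_less_top_iff[of 2 "S n"] by (simp add: hS)
  have "S m \<le> 1 + S n" unfolding S_def
  proof (rule SUP_least)
    fix r :: real assume r: "r \<in> {0..<1}"
    have cont: "continuous_on UNIV (\<lambda>t::real. f (complex_of_real r * cis t) ^ n)"
      by (intro continuous_intros continuous_on_compose2[OF f]) (use r in \<open>auto intro!: continuous_intros simp: norm_mult\<close>)
    have meas: "(\<lambda>t. ennreal ((cmod (f (complex_of_real r * cis t) ^ n))\<^sup>2) * indicator {0..2*pi} t) \<in> borel_measurable lborel"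
    proof -
      have [measurable]: "(\<lambda>t::real. f (complex_of_real r * cis t) ^ n) \<in> borel_measurable borel"
        by (rule borel_measurable_continuous_onI[OF cont])
      show ?thesis by measurable
    qed
    have "ennreal (1 / (2 * pi)) * (\<integral>\<^sup>+ t\<in>{0..2*pi}. ennreal ((cmod (f (complex_of_real r * cis t) ^ m))\<^sup>2) \<partial>lborel)
        \<le> ennreal (1 / (2 * pi)) * (emeasure lborel {0..2*pi} + (\<integral>\<^sup>+ t\<in>{0..2*pi}. ennreal ((cmod (f (complex_of_real r * cis t) ^ n))\<^sup>2) \<partial>lborel))"
      by (intro mult_left_mono int_pow_fin[OF meas _ mn]) auto
    also have "\<dots> = 1 + ennreal (1 / (2 * pi)) * (\<integral>\<^sup>+ t\<in>{0..2*pi}. ennreal ((cmod (f (complex_of_real r * cis t) ^ n))\<^sup>2) \<partial>lborel)"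
      by (simp add: distrib_left flip: ennreal_mult)
    also have "\<dots> \<le> 1 + (SUP r\<in>{0..<1::real}. ennreal (1 / (2 * pi)) *
      (\<integral>\<^sup>+ t\<in>{0..2*pi}. ennreal ((cmod (f (complex_of_real r * cis t) ^ n))\<^sup>2) \<partial>lborel))"
      using r by (intro add_left_mono SUP_upper) auto
    finally show "ennreal (1 / (2 * pi)) * (\<integral>\<^sup>+ t\<in>{0..2*pi}. ennreal ((cmod (f (complex_of_real r * cis t) ^ m))\<^sup>2) \<partial>lborel)
        \<le> 1 + (SUP r\<in>{0..<1::real}. ennreal (1 / (2 * pi)) *
      (\<integral>\<^sup>+ t\<in>{0..2*pi}. ennreal ((cmod (f (complex_of_real r * cis t) ^ n))\<^sup>2) \<partial>lborel))" .
  qed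
  also have "\<dots> < top" using Sn by (simp add: less_top)
  finally have "S m < top" .
  then show ?thesis using ennroot_less_top_iff[of 2 "S m"] by (simp add: hS)
qed

lemma bergman_fin:
  assumes f: "continuous_on (ball 0 1) f" and mn: "m < n"
    and fin: "bergman_norm (\<lambda>z. f z ^ n) < top"
  shows "bergman_norm (\<lambda>z. f z ^ m) < top"
proof -
  define S where "S = (\<lambda>k. ennreal (1 / pi) * (\<integral>\<^sup>+ z\<in>ball 0 1. ennreal ((cmod (f z ^ k))\<^sup>2) \<partial>lborel))"
  have hS: "bergman_norm (\<lambda>z. f z ^ k) = ennroot 2 (S k)" for k by (simp add: bergman_norm_def S_def)
  have Sn: "S n < top" using fin ennroot_less_top_iff[of 2 "S n"] by (simp add: hS)
  have meas: "(\<lambda>z. ennreal ((cmod (f z ^ n))\<^sup>2) * indicator (ball 0 1) z) \<in> borel_measurable lborel"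
  proof -
    have c: "continuous_on (ball 0 1) (\<lambda>z. (cmod (f z ^ n))\<^sup>2)" by (intro continuous_intros f)
    have "(\<lambda>z. indicator (ball (0::complex) 1) z *\<^sub>R (cmod (f z ^ n))\<^sup>2) \<in> borel_measurable borel"
      by (rule borel_measurable_continuous_on_indicator[OF _ c]) simp
    then have [measurable]: "(\<lambda>z. indicator (ball (0::complex) 1) z * (cmod (f z ^ n))\<^sup>2) \<in> borel_measurable borel"
      by simp
    have "(\<lambda>z. ennreal (indicator (ball (0::complex) 1) z * (cmod (f z ^ n))\<^sup>2)) \<in> borel_measurable lborel"
      by measurable
    moreover have "(\<lambda>z. ennreal (indicator (ball (0::complex) 1) z * (cmod (f z ^ n))\<^sup>2))
        = (\<lambda>z. ennreal ((cmod (f z ^ n))\<^sup>2) * indicator (ball 0 1) z)"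
      by (auto simp: indicator_def fun_eq_iff)
    ultimately show ?thesis by simp
  qed
  have "S m \<le> ennreal (1 / pi) * (emeasure lborel (ball (0::complex) 1) + (\<integral>\<^sup>+ z\<in>ball 0 1. ennreal ((cmod (f z ^ n))\<^sup>2) \<partial>lborel))"
    unfolding S_def by (intro mult_left_mono int_pow_fin[OF meas _ mn]) auto
  also have "\<dots> = 1 + S n"
    by (simp add: S_def emeasure_unit_disc distrib_left flip: ennreal_mult)
  also have "\<dots> < top" using Sn by (simp add: less_top)
  finally have "S m < top" .
  then show ?thesis using ennroot_less_top_iff[of 2 "S m"] by (simp add: hS)
qed

theorem proposition2p1:
  fixes f :: "complex \<Rightarrow> complex" and m n :: nat
  assumes "0 < m" and "m < n" and "f holomorphic_on ball 0 1"
  shows "ennroot m (garsia_H2 (\<lambda>z. f z ^ m)) \<le> ennroot n (garsia_H2 (\<lambda>z. f z ^ n)) \<and>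
         ennroot m (garsia_A2 (\<lambda>z. f z ^ m)) \<le> ennroot n (garsia_A2 (\<lambda>z. f z ^ n)) \<and>
         (BMOA (\<lambda>z. f z ^ n) \<longrightarrow> BMOA (\<lambda>z. f z ^ m)) \<and>
         (Bloch (\<lambda>z. f z ^ n) \<longrightarrow> Bloch (\<lambda>z. f z ^ m)) \<and>
         (VMOA (\<lambda>z. f z ^ n) \<longrightarrow> VMOA (\<lambda>z. f z ^ m)) \<and>
         (little_Bloch (\<lambda>z. f z ^ n) \<longrightarrow> little_Bloch (\<lambda>z. f z ^ m))"
proof -
  note mn = assms(1,2)
  have n0: "0 < n" using mn by simp
  note hol = assms(3)
  have fc: "continuous_on (ball 0 1) f" using hol by (rule holomorphic_on_imp_continuous_on)
  have holm: "(\<lambda>z. f z ^ m) holomorphic_on ball 0 1" by (intro holomorphic_intros hol)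
  have pH: "hardy_norm (\<lambda>z. f (disc_phi a z) ^ m - f a ^ m) ^ n
      \<le> hardy_norm (\<lambda>z. f (disc_phi a z) ^ n - f a ^ n) ^ m" if "a \<in> ball 0 1" for a
    using PH[OF comp_hol[OF hol that] mn] by (simp add: disc_phi_0)
  have pB: "bergman_norm (\<lambda>z. f (disc_phi a z) ^ m - f a ^ m) ^ n
      \<le> bergman_norm (\<lambda>z. f (disc_phi a z) ^ n - f a ^ n) ^ m" if "a \<in> ball 0 1" for a
    using PB[OF comp_hol[OF hol that] mn] by (simp add: disc_phi_0)
  have G1: "ennroot m (garsia_H2 (\<lambda>z. f z ^ m)) \<le> ennroot n (garsia_H2 (\<lambda>z. f z ^ n))"
    unfolding ennroot_cmp_iff[OF mn(1) n0] garsia_H2_def by (rule SUP_pow_le[OF pH n0])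
  have G2: "ennroot m (garsia_A2 (\<lambda>z. f z ^ m)) \<le> ennroot n (garsia_A2 (\<lambda>z. f z ^ n))"
    unfolding ennroot_cmp_iff[OF mn(1) n0] garsia_A2_def by (rule SUP_pow_le[OF pB n0])
  have B1: "BMOA (\<lambda>z. f z ^ m)" if "BMOA (\<lambda>z. f z ^ n)"
  proof -
    have "ennroot n (garsia_H2 (\<lambda>z. f z ^ n)) < top"
      using that ennroot_less_top_iff[OF n0] by (simp add: BMOA_def)
    then have "ennroot m (garsia_H2 (\<lambda>z. f z ^ m)) < top" using G1 by (rule le_less_trans[rotated])
    then show ?thesis using ennroot_less_top_iff[OF mn(1)] holm by (simp add: BMOA_def)
  qed
  have B2: "Bloch (\<lambda>z. f z ^ m)" if "Bloch (\<lambda>z. f z ^ n)"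
  proof -
    have "ennroot n (garsia_A2 (\<lambda>z. f z ^ n)) < top"
      using that ennroot_less_top_iff[OF n0] by (simp add: Bloch_def)
    then have "ennroot m (garsia_A2 (\<lambda>z. f z ^ m)) < top" using G2 by (rule le_less_trans[rotated])
    then show ?thesis using ennroot_less_top_iff[OF mn(1)] holm by (simp add: Bloch_def)
  qed
  have V1: "VMOA (\<lambda>z. f z ^ m)" if V: "VMOA (\<lambda>z. f z ^ n)"
    unfolding VMOA_def
  proof (intro conjI allI impI)
    show "(\<lambda>z. f z ^ m) holomorphic_on ball 0 1" by (rule holm)
    show "hardy_norm (\<lambda>z. f z ^ m) < top"
      using hardy_fin[OF fc mn(2)] V by (simp add: VMOA_def)
    fix e :: real assume e: "0 < e"
    have e': "0 < root m (e ^ n)" using e mn by simp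
    obtain r where r: "r < 1" and rH: "\<forall>a\<in>ball 0 1. r < norm a \<longrightarrow>
        hardy_norm (\<lambda>z. f (disc_phi a z) ^ n - f a ^ n) < ennreal (root m (e ^ n))"
      using V e' unfolding VMOA_def by blast
    show "\<exists>r<1. \<forall>a\<in>ball 0 1. r < norm a \<longrightarrow> hardy_norm (\<lambda>z. f (disc_phi a z) ^ m - f a ^ m) < ennreal e"
    proof (intro exI[of _ r] conjI ballI impI r)
      fix a :: complex assume a: "a \<in> ball 0 1" "r < norm a"
      show "hardy_norm (\<lambda>z. f (disc_phi a z) ^ m - f a ^ m) < ennreal e"
        by (rule small_transfer[OF pH[OF a(1)] _ mn(1) n0 e]) (use rH a in blast)
    qed
  qed
  have V2: "little_Bloch (\<lambda>z. f z ^ m)" if V: "little_Bloch (\<lambda>z. f z ^ n)"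
    unfolding little_Bloch_def
  proof (intro conjI allI impI)
    show "(\<lambda>z. f z ^ m) holomorphic_on ball 0 1" by (rule holm)
    show "bergman_norm (\<lambda>z. f z ^ m) < top"
      using bergman_fin[OF fc mn(2)] V by (simp add: little_Bloch_def)
    fix e :: real assume e: "0 < e"
    have e': "0 < root m (e ^ n)" using e mn by simp
    obtain r where r: "r < 1" and rH: "\<forall>a\<in>ball 0 1. r < norm a \<longrightarrow>
        bergman_norm (\<lambda>z. f (disc_phi a z) ^ n - f a ^ n) < ennreal (root m (e ^ n))"
      using V e' unfolding little_Bloch_def by blast
    show "\<exists>r<1. \<forall>a\<in>ball 0 1. r < norm a \<longrightarrow> bergman_norm (\<lambda>z. f (disc_phi a z) ^ m - f a ^ m) < ennreal e"
    proof (intro exI[of _ r] conjI ballI impI r)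
      fix a :: complex assume a: "a \<in> ball 0 1" "r < norm a"
      show "bergman_norm (\<lambda>z. f (disc_phi a z) ^ m - f a ^ m) < ennreal e"
        by (rule small_transfer[OF pB[OF a(1)] _ mn(1) n0 e]) (use rH a in blast)
    qed
  qed
  show ?thesis using G1 G2 B1 B2 V1 V2 by blast
qed

end
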